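(* Let $A$ be a Cayley--Dickson algebra over a field $F$ and $f(x)\in A[x]$. If $\lambda\in A\setminus F$ is a spherical root of $f(x)$, then $\lambda$ is a root of the companion polynomial $C_f(x)$.
   Context: For an $F$-algebra $B$ with involution and $\gamma\in F^\times$, the Cayley--Dickson double $B\{\gamma\}$ is $B\times B$ with componentwise linear operations, product $(a,b)(c,d)=(ac+\gamma\bar d b,\ da+b\bar c)$ and involution $\overline{(a,b)}=(\bar a,-b)$. Cayley--Dickson algebras over $F$: $A_1=F[\ell_1:\ell_1^2=\ell_1+\mu]$ with $\mu\in F$, $4\mu+1\neq0$, involution $\overline{\alpha+\beta\ell_1}=(\alpha+\beta)-\beta\ell_1$, and $A_{k+1}=A_k\{\gamma_k\}$, $\gamma_k\in F^\times$; $F$ is identified with $F\cdot1$. Trace $\mathrm{tr}(\lambda)=\lambda+\bar\lambda\in F$, norm $\mathrm{n}(\lambda)=\bar\lambda\lambda\in F$, characteristic polynomial $p_\lambda(x)=x^2-\mathrm{tr}(\lambda)x+\mathrm{n}(\lambda)\in F[x]$. The polynomial ring $A[x]=A\otimes_F F[x]$ has central indeterminate $x$; $f(x)=a_mx^m+\dots+a_0$ with $a_k\in A$, products via $(ax^i)(bx^j)=(ab)x^{i+j}$, substitution $f(r)=\sum_k a_k(r^k)$. The involution extends by $\overline{f(x)}=\bar a_mx^m+\dots+\bar a_0$, and the companion polynomial is $C_f(x)=\overline{f(x)}\cdot f(x)$, which lies in $F[x]$ (it is the norm of $f$ in the Cayley--Dickson algebra $A\otimes_F F(x)$). A root $\lambda\in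 A\setminus F$ of $f$ is a spherical root if every $r\in A$ with $p_\lambda(r)=0$ is also a root of $f$. *)

theory Defs
  imports Main
begin

text \<open>An element of A_1 = F[l1] is
  Q alpha beta (meaning alpha + beta l1); an element of B{gamma} = B x B is D a b.
  The algebra A_k (k >= 1) is determined by mu and the list gs of doubling
  parameters, written OUTERMOST FIRST: gs = [gamma_(k-1), ..., gamma_1], so that
  A_(k) = A_(k-1){gamma_(k-1)}.  The carrier of A_k is cd_carrier (length gs).\<close>

datatype 'a cd = Q 'a 'a | D "'a cd" "'a cd"

fun cd_carrier :: "nat \<Rightarrow> 'a cd set" where
  "cd_carrier 0 = {Q a b | a b. True}"
| "cd_carrier (Suc n) = {D a b | a b. a \<in> cd_carrier n \<and> b \<in> cd_carrier n}"

fun cd_add :: "'a::field cd \<Rightarrow> 'a cd \<Rightarrow> 'a cd" where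
  "cd_add (Q a b) (Q c d) = Q (a + c) (b + d)"
| "cd_add (D a b) (D c d) = D (cd_add a c) (cd_add b d)"
| "cd_add _ _ = undefined"

fun cd_smult :: "'a::field \<Rightarrow> 'a cd \<Rightarrow> 'a cd" where
  "cd_smult t (Q a b) = Q (t * a) (t * b)"
| "cd_smult t (D a b) = D (cd_smult t a) (cd_smult t b)"

definition cd_neg :: "'a::field cd \<Rightarrow> 'a cd" where
  "cd_neg x = cd_smult (-1) x"

definition cd_sub :: "'a::field cd \<Rightarrow> 'a cd \<Rightarrow> 'a cd" where
  "cd_sub x y = cd_add x (cd_neg y)"

fun cd_conj :: "'a::field cd \<Rightarrow> 'a cd" where
  "cd_conj (Q a b) = Q (a + b) (- b)"
| "cd_conj (D a b) = D (cd_conj a) (cd_neg b)"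

text \<open>Embedding of F as F * 1 in A_(n+1) (n = number of doublings).\<close>
fun cd_scalar :: "nat \<Rightarrow> 'a::field \<Rightarrow> 'a cd" where
  "cd_scalar 0 c = Q c 0"
| "cd_scalar (Suc n) c = D (cd_scalar n c) (cd_scalar n 0)"

abbreviation cd_zero :: "nat \<Rightarrow> 'a::field cd" where
  "cd_zero n \<equiv> cd_scalar n 0"

abbreviation cd_one :: "nat \<Rightarrow> 'a::field cd" where
  "cd_one n \<equiv> cd_scalar n 1"

text \<open>Multiplication: (a+b l)(c+d l) = ac + mu bd + (ad + bc + bd) l on A_1, and
  (a,b)(c,d) = (ac + gamma conj(d) b, da + b conj(c)) for a doubling.\<close>
fun cd_mult :: "'a::field \<Rightarrow> 'a list \<Rightarrow> 'a cd \<Rightarrow> 'a cd \<Rightarrow> 'a cd" where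
  "cd_mult mu [] (Q a b) (Q c d) = Q (a * c + mu * (b * d)) (a * d + b * c + b * d)"
| "cd_mult mu (g # gs) (D a b) (D c d) =
     D (cd_add (cd_mult mu gs a c) (cd_smult g (cd_mult mu gs (cd_conj d) b)))
       (cd_add (cd_mult mu gs d a) (cd_mult mu gs b (cd_conj c)))"
| "cd_mult _ _ _ _ = undefined"

fun cd_pow :: "'a::field \<Rightarrow> 'a list \<Rightarrow> 'a cd \<Rightarrow> nat \<Rightarrow> 'a cd" where
  "cd_pow mu gs r 0 = cd_one (length gs)"
| "cd_pow mu gs r (Suc k) = cd_mult mu gs r (cd_pow mu gs r k)"

definition cd_sum :: "nat \<Rightarrow> 'a::field cd list \<Rightarrow> 'a cd" where
  "cd_sum n xs = foldr cd_add xs (cd_zero n)"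

text \<open>A polynomial f(x) = a_m x^m + ... + a_0 in A[x] is its coefficient list
  [a_0, ..., a_m]; substitution f(r) = sum_k a_k (r^k).\<close>
definition cd_poly_eval :: "'a::field \<Rightarrow> 'a list \<Rightarrow> 'a cd list \<Rightarrow> 'a cd \<Rightarrow> 'a cd" where
  "cd_poly_eval mu gs fs r =
     cd_sum (length gs) (map (\<lambda>k. cd_mult mu gs (fs ! k) (cd_pow mu gs r k)) [0..<length fs])"

text \<open>Companion polynomial C_f = conj(f) * f in A[x]: coefficient of x^m is
  sum over i + j = m of conj(a_i) a_j.\<close>
definition cd_companion :: "'a::field \<Rightarrow> 'a list \<Rightarrow> 'a cd list \<Rightarrow> 'a cd list" where
  "cd_companion mu gs fs =
     map (\<lambda>m. cd_sum (length gs)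
        (map (\<lambda>i. cd_mult mu gs (cd_conj (fs ! i)) (fs ! (m - i)))
           (filter (\<lambda>i. i < length fs \<and> m - i < length fs) [0..<Suc m])))
       [0..<2 * length fs]"

text \<open>Trace, norm (as elements of F * 1 inside A) and the characteristic
  polynomial evaluated at r: p_lambda(r) = r^2 - tr(lambda) r + n(lambda).\<close>
definition cd_tr :: "'a::field \<Rightarrow> 'a list \<Rightarrow> 'a cd \<Rightarrow> 'a cd" where
  "cd_tr mu gs l = cd_add l (cd_conj l)"

definition cd_norm :: "'a::field \<Rightarrow> 'a list \<Rightarrow> 'a cd \<Rightarrow> 'a cd" where
  "cd_norm mu gs l = cd_mult mu gs (cd_conj l) l"

definition cd_charpoly_eval :: "'a::field \<Rightarrow> 'a list \<Rightarrow> 'a cd \<Rightarrow> 'a cd \<Rightarrow> 'a cd" where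
  "cd_charpoly_eval mu gs l r =
     cd_add (cd_sub (cd_pow mu gs r 2) (cd_mult mu gs (cd_tr mu gs l) r)) (cd_norm mu gs l)"

definition cd_is_scalar :: "'a list \<Rightarrow> 'a::field cd \<Rightarrow> bool" where
  "cd_is_scalar gs x \<longleftrightarrow> (\<exists>c. x = cd_scalar (length gs) c)"

definition cd_valid :: "'a::field \<Rightarrow> 'a list \<Rightarrow> bool" where
  "cd_valid mu gs \<longleftrightarrow> 4 * mu + 1 \<noteq> 0 \<and> (\<forall>g \<in> set gs. g \<noteq> 0)"

definition cd_spherical_root :: "'a::field \<Rightarrow> 'a list \<Rightarrow> 'a cd list \<Rightarrow> 'a cd \<Rightarrow> bool" where
  "cd_spherical_root mu gs fs l \<longleftrightarrow>
     l \<in> cd_carrier (length gs) \<and> \<not> cd_is_scalar gs l \<and>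
     cd_poly_eval mu gs fs l = cd_zero (length gs) \<and>
     (\<forall>r \<in> cd_carrier (length gs).
        cd_charpoly_eval mu gs l r = cd_zero (length gs) \<longrightarrow>
        cd_poly_eval mu gs fs r = cd_zero (length gs))"

end

theory Submission
  imports Defs
begin


fun crd :: "'a::zero cd \<Rightarrow> nat \<Rightarrow> 'a" where
  "crd (Q a b) i = (if i = 0 then a else if i = 1 then b else 0)"
| "crd (D x y) i = (if even i then crd x (i div 2) else crd y (i div 2))"

lemma carrier_0E: "x \<in> cd_carrier 0 \<Longrightarrow> (\<And>a b. x = Q a b \<Longrightarrow> P) \<Longrightarrow> P" by auto
lemma carrier_SucE: "x \<in> cd_carrier (Suc n) \<Longrightarrow> (\<And>a b. x = D a b \<Longrightarrow> a \<in> cd_carrier n \<Longrightarrow> b \<in> cd_carrier n \<Longrightarrow> P) \<Longrightarrow> P" by auto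
lemma carrier_D[simp]: "D a b \<in> cd_carrier n \<longleftrightarrow> (\<exists>m. n = Suc m \<and> a \<in> cd_carrier m \<and> b \<in> cd_carrier m)"
  by (cases n) auto
lemma carrier_Q[simp]: "Q a b \<in> cd_carrier n \<longleftrightarrow> n = 0"
  by (cases n) auto

lemma crd_inj: "x \<in> cd_carrier n \<Longrightarrow> y \<in> cd_carrier n \<Longrightarrow> (\<And>i. crd x i = crd y i) \<Longrightarrow> x = y"
proof (induction n arbitrary: x y)
  case 0
  then obtain a b c d where "x = Q a b" "y = Q c d" by auto
  with 0(3)[of 0] 0(3)[of 1] show ?case by simp
next
  case (Suc n)
  then obtain a b c d where xy: "x = D a b" "y = D c d" and c: "a \<in> cd_carrier n" "b \<in> cd_carrier n" "c \<in> cd_carrier n" "d \<in> cd_carrier n" by auto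
  have "a = c" using Suc.IH[OF c(1) c(3)] Suc.prems(3)[of "2*_"] xy by auto
  moreover have "b = d" using Suc.IH[OF c(2) c(4)] Suc.prems(3)[of "2*_+1"] xy by auto
  ultimately show ?case using xy by simp
qed

lemma add_carrier[intro,simp]: "x \<in> cd_carrier n \<Longrightarrow> y \<in> cd_carrier n \<Longrightarrow> cd_add x y \<in> cd_carrier n"
  by (induction n arbitrary: x y) auto
lemma smult_carrier[intro,simp]: "x \<in> cd_carrier n \<Longrightarrow> cd_smult c x \<in> cd_carrier n"
  by (induction n arbitrary: x) auto
lemma neg_carrier[intro,simp]: "x \<in> cd_carrier n \<Longrightarrow> cd_neg x \<in> cd_carrier n"
  by (auto simp: cd_neg_def)
lemma sub_carrier[intro,simp]: "x \<in> cd_carrier n \<Longrightarrow> y \<in> cd_carrier n \<Longrightarrow> cd_sub x y \<in> cd_carrier n"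
  by (auto simp: cd_sub_def)
lemma conj_carrier[intro,simp]: "x \<in> cd_carrier n \<Longrightarrow> cd_conj x \<in> cd_carrier n"
  by (induction n arbitrary: x) (auto simp: cd_neg_def)
lemma scalar_carrier[intro,simp]: "cd_scalar n c \<in> cd_carrier n"
  by (induction n arbitrary: c) auto
lemma mult_carrier[intro,simp]: "x \<in> cd_carrier (length gs) \<Longrightarrow> y \<in> cd_carrier (length gs) \<Longrightarrow> cd_mult mu gs x y \<in> cd_carrier (length gs)"
  by (induction gs arbitrary: x y) auto
lemma pow_carrier[intro,simp]: "x \<in> cd_carrier (length gs) \<Longrightarrow> cd_pow mu gs x k \<in> cd_carrier (length gs)"
  by (induction k) auto
lemma sum_carrier[intro]: "(\<And>x. x \<in> set xs \<Longrightarrow> x \<in> cd_carrier n) \<Longrightarrow> cd_sum n xs \<in> cd_carrier n"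
  unfolding cd_sum_def by (induction xs) auto

lemma crd_add: "x \<in> cd_carrier n \<Longrightarrow> y \<in> cd_carrier n \<Longrightarrow> crd (cd_add x y) i = crd x i + crd y i"
  by (induction n arbitrary: x y i) auto
lemma crd_smult[simp]: "crd (cd_smult c x) i = c * crd x i"
  by (induction x arbitrary: i) auto
lemma crd_neg[simp]: "crd (cd_neg x) i = - crd x i"
  by (simp add: cd_neg_def)
lemma crd_sub: "x \<in> cd_carrier n \<Longrightarrow> y \<in> cd_carrier n \<Longrightarrow> crd (cd_sub x y) i = crd x i - crd y i"
  by (simp add: cd_sub_def crd_add[where n=n])
lemma crd_scalar[simp]: "crd (cd_scalar n c) i = (if i = 0 then c else 0)"
  by (induction n arbitrary: c i) auto
lemma crd_sum: "(\<And>x. x \<in> set xs \<Longrightarrow> x \<in> cd_carrier n) \<Longrightarrow> crd (cd_sum n xs) i = (\<Sum>x\<leftarrow>xs. crd x i)"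
  unfolding cd_sum_def
proof (induction xs)
  case (Cons a xs)
  have h1: "foldr cd_add xs (cd_zero n) \<in> cd_carrier n" using sum_carrier[unfolded cd_sum_def, of xs n] Cons.prems by auto
  have h2: "a \<in> cd_carrier n" using Cons.prems by auto
  have "crd (foldr cd_add xs (cd_zero n)) i = (\<Sum>x\<leftarrow>xs. crd x i)" using Cons by auto
  then show ?case using crd_add[OF h2 h1] by simp
qed simp



lemma smult_smult[simp]: "cd_smult a (cd_smult b x) = cd_smult (a*b) x"
  by (induction x) (auto simp: mult.assoc)

lemma smult_zero[simp]: "cd_smult c (cd_zero n) = cd_zero n"
  by (induction n) auto

lemma conj_add: "x \<in> cd_carrier n \<Longrightarrow> y \<in> cd_carrier n \<Longrightarrow> cd_conj (cd_add x y) = cd_add (cd_conj x) (cd_conj y)"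
proof (induction n arbitrary: x y)
  case 0 then show ?case by (auto simp: algebra_simps)
next
  case (Suc n)
  then obtain a b c d where "x = D a b" "a \<in> cd_carrier n" "b \<in> cd_carrier n" "y = D c d" "c \<in> cd_carrier n" "d \<in> cd_carrier n" by auto
  then show ?case using Suc.IH by (auto intro!: crd_inj[where n=n] simp: cd_neg_def algebra_simps crd_add[where n=n])
qed

lemma conj_smult: "cd_conj (cd_smult c x) = cd_smult c (cd_conj x)"
  by (induction x) (auto simp: cd_neg_def algebra_simps)

lemma conj_conj[simp]: "x \<in> cd_carrier n \<Longrightarrow> cd_conj (cd_conj x) = x"
proof (induction n arbitrary: x)
  case 0 then show ?case by auto
next
  case (Suc n)
  then obtain a b where "x = D a b" "a \<in> cd_carrier n" "b \<in> cd_carrier n" by auto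
  then show ?case using Suc.IH by (auto intro!: crd_inj[where n=n] simp: cd_neg_def conj_smult)
qed

lemma conj_scalar[simp]: "cd_conj (cd_scalar n c) = cd_scalar n c"
  by (induction n arbitrary: c) (auto simp: cd_neg_def)

lemma conj_neg: "cd_conj (cd_neg x) = cd_neg (cd_conj x)"
  by (simp add: cd_neg_def conj_smult)



lemma Cons_carrierE:
  assumes "x \<in> cd_carrier (length (g # gs))"
  obtains a b where "x = D a b" "a \<in> cd_carrier (length gs)" "b \<in> cd_carrier (length gs)"
  using assms by auto

lemma mult_add_both: "x \<in> cd_carrier (length gs) \<Longrightarrow> y \<in> cd_carrier (length gs) \<Longrightarrow> z \<in> cd_carrier (length gs) \<Longrightarrow>
  cd_mult mu gs x (cd_add y z) = cd_add (cd_mult mu gs x y) (cd_mult mu gs x z) \<and>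
  cd_mult mu gs (cd_add y z) x = cd_add (cd_mult mu gs y x) (cd_mult mu gs z x)"
proof (induction gs arbitrary: x y z)
  case Nil then show ?case by (auto simp: algebra_simps)
next
  case (Cons g gs)
  obtain a b where x: "x = D a b" "a \<in> cd_carrier (length gs)" "b \<in> cd_carrier (length gs)" using Cons.prems(1) by (rule Cons_carrierE)
  obtain c d where y: "y = D c d" "c \<in> cd_carrier (length gs)" "d \<in> cd_carrier (length gs)" using Cons.prems(2) by (rule Cons_carrierE)
  obtain e f where z: "z = D e f" "e \<in> cd_carrier (length gs)" "f \<in> cd_carrier (length gs)" using Cons.prems(3) by (rule Cons_carrierE)
  show ?case using x y z Cons.IH
    by (auto intro!: crd_inj[where n="length gs"] simp: conj_add[where n="length gs"] crd_add[where n="length gs"] algebra_simps)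
qed

lemma mult_add_right: "x \<in> cd_carrier (length gs) \<Longrightarrow> y \<in> cd_carrier (length gs) \<Longrightarrow> z \<in> cd_carrier (length gs) \<Longrightarrow>
  cd_mult mu gs x (cd_add y z) = cd_add (cd_mult mu gs x y) (cd_mult mu gs x z)"
  using mult_add_both by blast
lemma mult_add_left: "x \<in> cd_carrier (length gs) \<Longrightarrow> y \<in> cd_carrier (length gs) \<Longrightarrow> z \<in> cd_carrier (length gs) \<Longrightarrow>
  cd_mult mu gs (cd_add y z) x = cd_add (cd_mult mu gs y x) (cd_mult mu gs z x)"
  using mult_add_both by blast

lemma mult_smult_both: "x \<in> cd_carrier (length gs) \<Longrightarrow> y \<in> cd_carrier (length gs) \<Longrightarrow>
  cd_mult mu gs (cd_smult c x) y = cd_smult c (cd_mult mu gs x y) \<and> cd_mult mu gs y (cd_smult c x) = cd_smult c (cd_mult mu gs y x)"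
proof (induction gs arbitrary: x y)
  case Nil then show ?case by (auto simp: algebra_simps)
next
  case (Cons g gs)
  obtain a b where x: "x = D a b" "a \<in> cd_carrier (length gs)" "b \<in> cd_carrier (length gs)" using Cons.prems(1) by (rule Cons_carrierE)
  obtain e f where z: "y = D e f" "e \<in> cd_carrier (length gs)" "f \<in> cd_carrier (length gs)" using Cons.prems(2) by (rule Cons_carrierE)
  show ?case using x z Cons.IH
    by (auto intro!: crd_inj[where n="length gs"] simp: conj_smult crd_add[where n="length gs"] algebra_simps)
qed
lemma mult_smult_left: "x \<in> cd_carrier (length gs) \<Longrightarrow> y \<in> cd_carrier (length gs) \<Longrightarrow>
  cd_mult mu gs (cd_smult c x) y = cd_smult c (cd_mult mu gs x y)"
  using mult_smult_both by blast
lemma mult_smult_right: "x \<in> cd_carrier (length gs) \<Longrightarrow> y \<in> cd_carrier (length gs) \<Longrightarrow>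
  cd_mult mu gs x (cd_smult c y) = cd_smult c (cd_mult mu gs x y)"
  using mult_smult_both by blast

lemma smult_0: "x \<in> cd_carrier n \<Longrightarrow> cd_smult 0 x = cd_zero n"
  by (rule crd_inj[where n=n]) auto

lemma smult_1[simp]: "cd_smult 1 x = x"
  by (induction x) auto

lemma scalar_smult: "cd_scalar n c = cd_smult c (cd_one n)"
  by (rule crd_inj[where n=n]) auto

lemma mult_zero_left[simp]: "x \<in> cd_carrier (length gs) \<Longrightarrow> cd_mult mu gs (cd_zero (length gs)) x = cd_zero (length gs)"
  by (metis mult_smult_left smult_0 smult_zero mult_carrier scalar_carrier)

lemma mult_zero_right[simp]: "x \<in> cd_carrier (length gs) \<Longrightarrow> cd_mult mu gs x (cd_zero (length gs)) = cd_zero (length gs)"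
  by (metis mult_smult_right smult_0 smult_zero mult_carrier scalar_carrier)

lemma mult_one_both: "x \<in> cd_carrier (length gs) \<Longrightarrow> cd_mult mu gs (cd_one (length gs)) x = x \<and> cd_mult mu gs x (cd_one (length gs)) = x"
proof (induction gs arbitrary: x)
  case Nil then show ?case by auto
next
  case (Cons g gs)
  obtain a b where x: "x = D a b" "a \<in> cd_carrier (length gs)" "b \<in> cd_carrier (length gs)" using Cons.prems(1) by (rule Cons_carrierE)
  show ?case using x Cons.IH
    by (auto intro!: crd_inj[where n="length gs"] simp: crd_add[where n="length gs"])
qed

lemma mult_scalar_left: "x \<in> cd_carrier (length gs) \<Longrightarrow> cd_mult mu gs (cd_scalar (length gs) c) x = cd_smult c x"
  using mult_one_both[of x gs mu] mult_smult_left[of "cd_one (length gs)" gs x mu c] by (simp add: scalar_smult[of "length gs" c])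

lemma mult_scalar_right: "x \<in> cd_carrier (length gs) \<Longrightarrow> cd_mult mu gs x (cd_scalar (length gs) c) = cd_smult c x"
  using mult_one_both[of x gs mu] mult_smult_right[of x gs "cd_one (length gs)" mu c] by (simp add: scalar_smult[of "length gs" c])



lemma conj_mult: "x \<in> cd_carrier (length gs) \<Longrightarrow> y \<in> cd_carrier (length gs) \<Longrightarrow>
  cd_conj (cd_mult mu gs x y) = cd_mult mu gs (cd_conj y) (cd_conj x)"
proof (induction gs arbitrary: x y)
  case Nil then show ?case by (auto simp: algebra_simps)
next
  case (Cons g gs)
  obtain a b where x: "x = D a b" "a \<in> cd_carrier (length gs)" "b \<in> cd_carrier (length gs)" using Cons.prems(1) by (rule Cons_carrierE)
  obtain c d where y: "y = D c d" "c \<in> cd_carrier (length gs)" "d \<in> cd_carrier (length gs)" using Cons.prems(2) by (rule Cons_carrierE)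
  show ?case using x y Cons.IH
    by (auto intro!: crd_inj[where n="length gs"] simp: cd_neg_def conj_smult conj_add[where n="length gs"] mult_smult_left mult_smult_right crd_add[where n="length gs"] algebra_simps)
qed

fun tr0 :: "'a::field cd \<Rightarrow> 'a" where
  "tr0 (Q a b) = 2 * a + b"
| "tr0 (D a b) = tr0 a"

fun Nm :: "'a::field \<Rightarrow> 'a list \<Rightarrow> 'a cd \<Rightarrow> 'a" where
  "Nm mu [] (Q a b) = a * a + a * b - mu * (b * b)"
| "Nm mu (g # gs) (D a b) = Nm mu gs a - g * Nm mu gs b"
| "Nm _ _ _ = 0"

lemma tr_scalar: "x \<in> cd_carrier n \<Longrightarrow> cd_add x (cd_conj x) = cd_scalar n (tr0 x)"
proof (induction n arbitrary: x)
  case 0 then show ?case by auto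
next
  case (Suc n)
  then obtain a b where "x = D a b" "a \<in> cd_carrier n" "b \<in> cd_carrier n" by auto
  then show ?case using Suc.IH by (auto intro!: crd_inj[where n=n] simp: cd_neg_def crd_add[where n=n])
qed

lemma tr0_add: "x \<in> cd_carrier n \<Longrightarrow> y \<in> cd_carrier n \<Longrightarrow> tr0 (cd_add x y) = tr0 x + tr0 y"
  by (induction n arbitrary: x y) auto
lemma tr0_smult[simp]: "tr0 (cd_smult c x) = c * tr0 x"
  by (induction x) (auto simp: algebra_simps)
lemma tr0_conj[simp]: "x \<in> cd_carrier n \<Longrightarrow> tr0 (cd_conj x) = tr0 x"
  by (induction n arbitrary: x) auto
lemma tr0_scalar[simp]: "tr0 (cd_scalar n c) = 2 * c"
  by (induction n arbitrary: c) auto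

lemma Nm_smult: "x \<in> cd_carrier (length gs) \<Longrightarrow> Nm mu gs (cd_smult c x) = c * c * Nm mu gs x"
  by (induction gs arbitrary: x) (auto simp: algebra_simps)
lemma Nm_conj: "x \<in> cd_carrier (length gs) \<Longrightarrow> Nm mu gs (cd_conj x) = Nm mu gs x"
  by (induction gs arbitrary: x) (auto simp: algebra_simps cd_neg_def Nm_smult)

lemma norm_scalar: "x \<in> cd_carrier (length gs) \<Longrightarrow> cd_mult mu gs (cd_conj x) x = cd_scalar (length gs) (Nm mu gs x)"
proof (induction gs arbitrary: x)
  case Nil then show ?case by (auto simp: algebra_simps)
next
  case (Cons g gs)
  obtain a b where x: "x = D a b" "a \<in> cd_carrier (length gs)" "b \<in> cd_carrier (length gs)" using Cons.prems(1) by (rule Cons_carrierE)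
  have e: "cd_mult mu gs (cd_neg b) (cd_conj a) = cd_neg (cd_mult mu gs b (cd_conj a))"
    using x by (simp add: cd_neg_def mult_smult_left)
  have e2: "cd_mult mu gs (cd_conj b) (cd_neg b) = cd_neg (cd_scalar (length gs) (Nm mu gs b))"
    using x Cons.IH by (simp add: cd_neg_def mult_smult_right)
  show ?case using x Cons.IH e e2
    by (auto intro!: crd_inj[where n="length gs"] simp: crd_add[where n="length gs"] algebra_simps)
qed

lemma norm_scalar': "x \<in> cd_carrier (length gs) \<Longrightarrow> cd_mult mu gs x (cd_conj x) = cd_scalar (length gs) (Nm mu gs x)"
  using norm_scalar[of "cd_conj x" gs mu] by (simp add: Nm_conj)



lemma add_zero_r[simp]: "x \<in> cd_carrier n \<Longrightarrow> cd_add x (cd_zero n) = x"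
  by (rule crd_inj[where n=n]) (auto simp: crd_add[where n=n])
lemma add_zero_l[simp]: "x \<in> cd_carrier n \<Longrightarrow> cd_add (cd_zero n) x = x"
  by (rule crd_inj[where n=n]) (auto simp: crd_add[where n=n])
lemma smult_eq_zero_iff: "x \<in> cd_carrier n \<Longrightarrow> (cd_smult c x = cd_zero n) \<longleftrightarrow> (c = 0 \<or> x = cd_zero n)"
proof
  assume x: "x \<in> cd_carrier n" and h: "cd_smult c x = cd_zero n"
  show "c = 0 \<or> x = cd_zero n"
  proof (cases "c = 0")
    case False
    have "crd x i = crd (cd_zero n) i" for i using arg_cong[OF h, of "\<lambda>z. crd z i"] False by auto
    then show ?thesis using crd_inj[OF x scalar_carrier] by blast
  qed simp
next
  assume "x \<in> cd_carrier n" "c = 0 \<or> x = cd_zero n"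
  then show "cd_smult c x = cd_zero n" using smult_0 by auto
qed
lemma conj_eq_zero_iff: "x \<in> cd_carrier n \<Longrightarrow> (cd_conj x = cd_zero n) \<longleftrightarrow> x = cd_zero n"
  by (metis conj_conj conj_scalar)
lemma neg_eq_zero_iff: "x \<in> cd_carrier n \<Longrightarrow> (cd_neg x = cd_zero n) \<longleftrightarrow> x = cd_zero n"
  by (simp add: cd_neg_def smult_eq_zero_iff)

definition rc :: "'a::field \<Rightarrow> 'a list \<Rightarrow> 'a cd \<Rightarrow> bool" where
  "rc mu gs u \<longleftrightarrow> (\<forall>b \<in> cd_carrier (length gs). cd_mult mu gs b u = cd_zero (length gs) \<longrightarrow> b = cd_zero (length gs))"
definition lc :: "'a::field \<Rightarrow> 'a list \<Rightarrow> 'a cd \<Rightarrow> bool" where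
  "lc mu gs u \<longleftrightarrow> (\<forall>b \<in> cd_carrier (length gs). cd_mult mu gs u b = cd_zero (length gs) \<longrightarrow> b = cd_zero (length gs))"
definition canc :: "'a::field \<Rightarrow> 'a list \<Rightarrow> 'a cd \<Rightarrow> bool" where
  "canc mu gs u \<longleftrightarrow> u \<in> cd_carrier (length gs) \<and> rc mu gs u \<and> lc mu gs u \<and> rc mu gs (cd_conj u) \<and> lc mu gs (cd_conj u)"

lemma base_ids:
  assumes "length gs \<le> 1" "u \<in> cd_carrier (length gs)" "b \<in> cd_carrier (length gs)"
  shows "cd_mult mu gs (cd_mult mu gs b u) (cd_conj u) = cd_smult (Nm mu gs u) b \<and>
         cd_mult mu gs (cd_conj u) (cd_mult mu gs u b) = cd_smult (Nm mu gs u) b"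
proof (cases gs)
  case Nil
  with assms obtain x y p q where "u = Q x y" "b = Q p q" by auto
  then show ?thesis using Nil by (simp add: algebra_simps)
next
  case (Cons g gs')
  with assms have gs: "gs = [g]" by auto
  with assms obtain x1 y1 x2 y2 p1 q1 p2 q2 where "u = D (Q x1 y1) (Q x2 y2)" "b = D (Q p1 q1) (Q p2 q2)"
    by (auto simp: numeral_2_eq_2)
  then show ?thesis using gs by (simp add: cd_neg_def algebra_simps)
qed

lemma base_canc:
  assumes "length gs \<le> 1" "u \<in> cd_carrier (length gs)" "Nm mu gs u \<noteq> 0"
  shows "canc mu gs u"
proof -
  have cu: "cd_conj u \<in> cd_carrier (length gs)" using assms by simp
  have Nc: "Nm mu gs (cd_conj u) \<noteq> 0" using assms by (simp add: Nm_conj)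
  have r: "rc mu gs v" "lc mu gs v" if v: "v \<in> cd_carrier (length gs)" "Nm mu gs v \<noteq> 0" for v
  proof -
    show "rc mu gs v" unfolding rc_def
    proof (intro ballI impI)
      fix b assume b: "b \<in> cd_carrier (length gs)" and h: "cd_mult mu gs b v = cd_zero (length gs)"
      have "cd_smult (Nm mu gs v) b = cd_zero (length gs)"
        using base_ids[OF assms(1) v(1) b, of mu] h v by simp
      then show "b = cd_zero (length gs)" using smult_eq_zero_iff[OF b] v by auto
    qed
    show "lc mu gs v" unfolding lc_def
    proof (intro ballI impI)
      fix b assume b: "b \<in> cd_carrier (length gs)" and h: "cd_mult mu gs v b = cd_zero (length gs)"
      have "cd_smult (Nm mu gs v) b = cd_zero (length gs)"
        using base_ids[OF assms(1) v(1) b, of mu] h v by simp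
      then show "b = cd_zero (length gs)" using smult_eq_zero_iff[OF b] v by auto
    qed
  qed
  show ?thesis unfolding canc_def using r[OF assms(2,3)] r[OF cu Nc] assms by auto
qed

lemma mult_neg_left: "x \<in> cd_carrier (length gs) \<Longrightarrow> y \<in> cd_carrier (length gs) \<Longrightarrow> cd_mult mu gs (cd_neg x) y = cd_neg (cd_mult mu gs x y)"
  by (simp add: cd_neg_def mult_smult_left)
lemma mult_neg_right: "x \<in> cd_carrier (length gs) \<Longrightarrow> y \<in> cd_carrier (length gs) \<Longrightarrow> cd_mult mu gs x (cd_neg y) = cd_neg (cd_mult mu gs x y)"
  by (simp add: cd_neg_def mult_smult_right)
lemma neg_zero[simp]: "cd_neg (cd_zero n) = cd_zero n"
  by (simp add: cd_neg_def)

lemma P1: "b1 \<in> cd_carrier (length gs) \<Longrightarrow> b2 \<in> cd_carrier (length gs) \<Longrightarrow> x \<in> cd_carrier (length gs) \<Longrightarrow>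
  cd_mult mu (g # gs) (D b1 b2) (D x (cd_zero (length gs))) = D (cd_mult mu gs b1 x) (cd_mult mu gs b2 (cd_conj x))"
  by simp
lemma P2: "b1 \<in> cd_carrier (length gs) \<Longrightarrow> b2 \<in> cd_carrier (length gs) \<Longrightarrow> x \<in> cd_carrier (length gs) \<Longrightarrow>
  cd_mult mu (g # gs) (D x (cd_zero (length gs))) (D b1 b2) = D (cd_mult mu gs x b1) (cd_mult mu gs b2 x)"
  by simp
lemma P3: "b1 \<in> cd_carrier (length gs) \<Longrightarrow> b2 \<in> cd_carrier (length gs) \<Longrightarrow> x \<in> cd_carrier (length gs) \<Longrightarrow>
  cd_mult mu (g # gs) (D b1 b2) (D (cd_zero (length gs)) x) = D (cd_smult g (cd_mult mu gs (cd_conj x) b2)) (cd_mult mu gs x b1)"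
  by simp
lemma P4: "b1 \<in> cd_carrier (length gs) \<Longrightarrow> b2 \<in> cd_carrier (length gs) \<Longrightarrow> x \<in> cd_carrier (length gs) \<Longrightarrow>
  cd_mult mu (g # gs) (D (cd_zero (length gs)) x) (D b1 b2) = D (cd_smult g (cd_mult mu gs (cd_conj b2) x)) (cd_mult mu gs x (cd_conj b1))"
  by simp

lemma canc_step:
  assumes c: "canc mu gs u" and g: "g \<noteq> 0"
  shows "canc mu (g # gs) (D u (cd_zero (length gs)))" "canc mu (g # gs) (D (cd_zero (length gs)) u)"
proof -
  let ?n = "length gs"
  let ?z = "cd_zero ?n"
  have u: "u \<in> cd_carrier ?n" and cu: "cd_conj u \<in> cd_carrier ?n" using c by (auto simp: canc_def)
  have R: "\<And>b. b \<in> cd_carrier ?n \<Longrightarrow> cd_mult mu gs b u = ?z \<Longrightarrow> b = ?z"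
   and L: "\<And>b. b \<in> cd_carrier ?n \<Longrightarrow> cd_mult mu gs u b = ?z \<Longrightarrow> b = ?z"
   and Rc: "\<And>b. b \<in> cd_carrier ?n \<Longrightarrow> cd_mult mu gs b (cd_conj u) = ?z \<Longrightarrow> b = ?z"
   and Lc: "\<And>b. b \<in> cd_carrier ?n \<Longrightarrow> cd_mult mu gs (cd_conj u) b = ?z \<Longrightarrow> b = ?z"
    using c unfolding canc_def rc_def lc_def by blast+
  have uu: "cd_conj (cd_conj u) = u" using u by simp
  have smz: "\<And>x. x \<in> cd_carrier ?n \<Longrightarrow> cd_smult g x = ?z \<longleftrightarrow> x = ?z" using g by (simp add: smult_eq_zero_iff)
  have ngz: "\<And>x. x \<in> cd_carrier ?n \<Longrightarrow> cd_neg x = ?z \<longleftrightarrow> x = ?z" by (simp add: neg_eq_zero_iff)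
  have cjz: "\<And>x. x \<in> cd_carrier ?n \<Longrightarrow> cd_conj x = ?z \<longleftrightarrow> x = ?z" by (simp add: conj_eq_zero_iff)
  have c1: "cd_conj (D u ?z) = D (cd_conj u) ?z" by simp
  have c2: "cd_conj (D ?z u) = D ?z (cd_neg u)" by simp
  have nu: "cd_neg u \<in> cd_carrier ?n" using u by simp
  have cnu: "cd_conj (cd_neg u) = cd_neg (cd_conj u)" by (simp add: conj_neg)
  have A: "rc mu (g#gs) (D x ?z)" "lc mu (g#gs) (D x ?z)"
    if x: "x \<in> cd_carrier ?n" and xr: "\<And>b. b \<in> cd_carrier ?n \<Longrightarrow> cd_mult mu gs b x = ?z \<Longrightarrow> b = ?z"
      and xl: "\<And>b. b \<in> cd_carrier ?n \<Longrightarrow> cd_mult mu gs x b = ?z \<Longrightarrow> b = ?z"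
      and xcr: "\<And>b. b \<in> cd_carrier ?n \<Longrightarrow> cd_mult mu gs b (cd_conj x) = ?z \<Longrightarrow> b = ?z" for x
  proof -
    show "rc mu (g#gs) (D x ?z)" unfolding rc_def
    proof (intro ballI impI)
      fix b assume b: "b \<in> cd_carrier (length (g#gs))" and h: "cd_mult mu (g # gs) b (D x ?z) = cd_zero (length (g#gs))"
      from b obtain b1 b2 where bb: "b = D b1 b2" "b1 \<in> cd_carrier ?n" "b2 \<in> cd_carrier ?n" by (rule Cons_carrierE)
      have "cd_mult mu gs b1 x = ?z" "cd_mult mu gs b2 (cd_conj x) = ?z" using h unfolding bb(1) P1[OF bb(2,3) x] by auto
      then show "b = cd_zero (length (g#gs))" using xr[OF bb(2)] xcr[OF bb(3)] bb(1) by simp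
    qed
    show "lc mu (g#gs) (D x ?z)" unfolding lc_def
    proof (intro ballI impI)
      fix b assume b: "b \<in> cd_carrier (length (g#gs))" and h: "cd_mult mu (g # gs) (D x ?z) b = cd_zero (length (g#gs))"
      from b obtain b1 b2 where bb: "b = D b1 b2" "b1 \<in> cd_carrier ?n" "b2 \<in> cd_carrier ?n" by (rule Cons_carrierE)
      have "cd_mult mu gs x b1 = ?z" "cd_mult mu gs b2 x = ?z" using h unfolding bb(1) P2[OF bb(2,3) x] by auto
      then show "b = cd_zero (length (g#gs))" using xl[OF bb(2)] xr[OF bb(3)] bb(1) by simp
    qed
  qed
  have B: "rc mu (g#gs) (D ?z x)" "lc mu (g#gs) (D ?z x)"
    if x: "x \<in> cd_carrier ?n" and xr: "\<And>b. b \<in> cd_carrier ?n \<Longrightarrow> cd_mult mu gs b x = ?z \<Longrightarrow> b = ?z"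
      and xl: "\<And>b. b \<in> cd_carrier ?n \<Longrightarrow> cd_mult mu gs x b = ?z \<Longrightarrow> b = ?z"
      and xcl: "\<And>b. b \<in> cd_carrier ?n \<Longrightarrow> cd_mult mu gs (cd_conj x) b = ?z \<Longrightarrow> b = ?z" for x
  proof -
    show "rc mu (g#gs) (D ?z x)" unfolding rc_def
    proof (intro ballI impI)
      fix b assume b: "b \<in> cd_carrier (length (g#gs))" and h: "cd_mult mu (g # gs) b (D ?z x) = cd_zero (length (g#gs))"
      from b obtain b1 b2 where bb: "b = D b1 b2" "b1 \<in> cd_carrier ?n" "b2 \<in> cd_carrier ?n" by (rule Cons_carrierE)
      have "cd_smult g (cd_mult mu gs (cd_conj x) b2) = ?z" "cd_mult mu gs x b1 = ?z" using h unfolding bb(1) P3[OF bb(2,3) x] by auto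
      then have "cd_mult mu gs (cd_conj x) b2 = ?z" "cd_mult mu gs x b1 = ?z" using smz[of "cd_mult mu gs (cd_conj x) b2"] x bb by auto
      then show "b = cd_zero (length (g#gs))" using xl[OF bb(2)] xcl[OF bb(3)] bb(1) by simp
    qed
    show "lc mu (g#gs) (D ?z x)" unfolding lc_def
    proof (intro ballI impI)
      fix b assume b: "b \<in> cd_carrier (length (g#gs))" and h: "cd_mult mu (g # gs) (D ?z x) b = cd_zero (length (g#gs))"
      from b obtain b1 b2 where bb: "b = D b1 b2" "b1 \<in> cd_carrier ?n" "b2 \<in> cd_carrier ?n" by (rule Cons_carrierE)
      have "cd_smult g (cd_mult mu gs (cd_conj b2) x) = ?z" "cd_mult mu gs x (cd_conj b1) = ?z" using h unfolding bb(1) P4[OF bb(2,3) x] by auto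
      then have "cd_mult mu gs (cd_conj b2) x = ?z" "cd_mult mu gs x (cd_conj b1) = ?z" using smz[of "cd_mult mu gs (cd_conj b2) x"] x bb by auto
      then have "cd_conj b2 = ?z" "cd_conj b1 = ?z" using xr[of "cd_conj b2"] xl[of "cd_conj b1"] bb by auto
      then show "b = cd_zero (length (g#gs))" using cjz[OF bb(2)] cjz[OF bb(3)] bb(1) by simp
    qed
  qed
  have Rn: "b = ?z" if "b \<in> cd_carrier ?n" "cd_mult mu gs b (cd_neg u) = ?z" for b
  proof -
    have "cd_neg (cd_mult mu gs b u) = ?z" using that u by (simp add: mult_neg_right)
    then have "cd_mult mu gs b u = ?z" using ngz[of "cd_mult mu gs b u"] that u by simp
    then show ?thesis using R that by blast
  qed
  have Ln: "b = ?z" if "b \<in> cd_carrier ?n" "cd_mult mu gs (cd_neg u) b = ?z" for b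
  proof -
    have "cd_neg (cd_mult mu gs u b) = ?z" using that u by (simp add: mult_neg_left)
    then have "cd_mult mu gs u b = ?z" using ngz[of "cd_mult mu gs u b"] that u by simp
    then show ?thesis using L that by blast
  qed
  have Lcn: "b = ?z" if "b \<in> cd_carrier ?n" "cd_mult mu gs (cd_conj (cd_neg u)) b = ?z" for b
  proof -
    have "cd_neg (cd_mult mu gs (cd_conj u) b) = ?z" using that cu by (simp add: cnu mult_neg_left)
    then have "cd_mult mu gs (cd_conj u) b = ?z" using ngz[of "cd_mult mu gs (cd_conj u) b"] that cu by simp
    then show ?thesis using Lc that by blast
  qed
  have Rcc: "b = ?z" if "b \<in> cd_carrier ?n" "cd_mult mu gs b (cd_conj (cd_conj u)) = ?z" for b
  proof -
    have "cd_mult mu gs b u = ?z" using that(2) uu by simp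
    then show ?thesis using R that(1) by blast
  qed
  have Lcc: "b = ?z" if "b \<in> cd_carrier ?n" "cd_mult mu gs (cd_conj (cd_conj u)) b = ?z" for b
  proof -
    have "cd_mult mu gs u b = ?z" using that(2) uu by simp
    then show ?thesis using L that(1) by blast
  qed
  have m1: "D u ?z \<in> cd_carrier (length (g # gs))" "D ?z u \<in> cd_carrier (length (g # gs))" using u by auto
  show "canc mu (g # gs) (D u ?z)"
    unfolding canc_def c1 using A[OF u R L Rc] A[OF cu Rc Lc Rcc] m1 by blast
  show "canc mu (g # gs) (D ?z u)"
    unfolding canc_def c2 using B[OF u R L Lc] B[OF nu Rn Ln Lcn] m1 by blast
qed



definition bf :: "'a::field \<Rightarrow> 'a list \<Rightarrow> 'a cd \<Rightarrow> 'a cd \<Rightarrow> 'a" where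
  "bf mu gs x y = tr0 (cd_mult mu gs (cd_conj x) y)"

lemma L2_0:
  assumes "4 * mu + 1 \<noteq> 0" "Q p q \<noteq> Q 0 0" "\<not> (2 = (0::'a) \<and> mu = 0 \<and> 2 * p + q = 0)"
  shows "\<exists>z \<in> cd_carrier 0. Nm mu [] z \<noteq> 0 \<and> bf mu [] z (Q p (q::'a::field)) \<noteq> 0"
proof (cases "2 * p + q = 0")
  case False
  then show ?thesis by (intro bexI[of _ "Q 1 0"]) (auto simp: bf_def)
next
  case True
  then have q: "q = - 2 * p" by (simp add: algebra_simps eq_neg_iff_add_eq_0)
  have p: "p \<noteq> 0" using assms(2) q by auto
  show ?thesis
  proof (cases "mu = 0")
    case False
    have e: "p + mu * (p * 4) = p * (1 + mu * 4)" by (simp add: algebra_simps)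
    have m4: "1 + mu * 4 \<noteq> 0" using assms(1) by (simp add: algebra_simps)
    have "p * (1 + mu * 4) \<noteq> 0" using p m4 by simp
    then have "p + mu * (p * 4) \<noteq> 0" using e by simp
    then show ?thesis using False q by (intro bexI[of _ "Q 0 1"]) (auto simp: bf_def algebra_simps)
  next
    case True
    then have two: "(2::'a) \<noteq> 0" using assms(3) \<open>2 * p + q = 0\<close> by auto
    have "p * 2 \<noteq> 0" using p two by simp
    then show ?thesis using True q two by (intro bexI[of _ "Q 1 1"]) (auto simp: bf_def algebra_simps)
  qed
qed

lemma L2_1:
  assumes mu4: "4 * mu + 1 \<noteq> 0" and g: "g \<noteq> 0" and b: "b \<in> cd_carrier 1" "b \<noteq> cd_zero 1"
  shows "\<exists>z \<in> cd_carrier 1. Nm mu [g] z \<noteq> 0 \<and> bf mu [g] z (b::'a::field cd) \<noteq> 0"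
proof -
  obtain p1 q1 p2 q2 where bb: "b = D (Q p1 q1) (Q p2 q2)" using b(1) by (auto simp: numeral_2_eq_2)
  have m4: "1 + mu * 4 \<noteq> 0" using mu4 by (simp add: algebra_simps)
  show ?thesis
  proof (cases "2 * p1 + q1 = 0")
    case False
    have "bf mu [g] (D (Q 1 0) (Q 0 0)) b = 2 * p1 + q1" unfolding bb bf_def by (simp add: cd_neg_def algebra_simps)
    then show ?thesis using False by (intro bexI[of _ "D (Q 1 0) (Q 0 0)"]) auto
  next
    case T1: True
    then have q1: "q1 = - 2 * p1" by (simp add: algebra_simps eq_neg_iff_add_eq_0)
    show ?thesis
    proof (cases "2 * p2 + q2 = 0")
      case False
      have "bf mu [g] (D (Q 0 0) (Q 1 0)) b = - g * (2 * p2 + q2)" unfolding bb bf_def by (simp add: cd_neg_def algebra_simps)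
      then show ?thesis using False g by (intro bexI[of _ "D (Q 0 0) (Q 1 0)"]) auto
    next
      case True
      then have q2: "q2 = - 2 * p2" by (simp add: algebra_simps eq_neg_iff_add_eq_0)
      show ?thesis
      proof (cases "p1 = 0")
        case False
        have nz: "p1 * (1 + mu * 4) \<noteq> 0" using False m4 by simp
        show ?thesis
        proof (cases "mu = 0")
          case True
          have "bf mu [g] (D (Q 0 1) (Q 1 0)) b = p1 * (1 + mu * 4)" unfolding bb bf_def q1 q2 by (simp add: cd_neg_def algebra_simps)
          moreover have "Nm mu [g] (D (Q 0 1) (Q 1 0)) = - g" using True by simp
          ultimately show ?thesis using nz g by (intro bexI[of _ "D (Q 0 1) (Q 1 0)"]) auto
        next
          case F: False
          have "bf mu [g] (D (Q 0 1) (Q 0 0)) b = p1 * (1 + mu * 4)" unfolding bb bf_def q1 q2 by (simp add: cd_neg_def algebra_simps)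
          moreover have "Nm mu [g] (D (Q 0 1) (Q 0 0)) = - mu" by simp
          ultimately show ?thesis using nz F by (intro bexI[of _ "D (Q 0 1) (Q 0 0)"]) auto
        qed
      next
        case p1: True
        have "p2 \<noteq> 0" using b(2) bb q1 q2 p1 by auto
        then have nz: "g * (p2 * (1 + mu * 4)) \<noteq> 0" using m4 g by simp
        show ?thesis
        proof (cases "mu = 0")
          case True
          have "bf mu [g] (D (Q 1 0) (Q 0 1)) b = - (g * (p2 * (1 + mu * 4)))" unfolding bb bf_def q1 q2 p1 by (simp add: cd_neg_def algebra_simps)
          moreover have "Nm mu [g] (D (Q 1 0) (Q 0 1)) = 1" using True by simp
          ultimately show ?thesis using nz by (intro bexI[of _ "D (Q 1 0) (Q 0 1)"]) auto
        next
          case F: False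
          have "bf mu [g] (D (Q 0 0) (Q 0 1)) b = - (g * (p2 * (1 + mu * 4)))" unfolding bb bf_def q1 q2 p1 by (simp add: cd_neg_def algebra_simps)
          moreover have "Nm mu [g] (D (Q 0 0) (Q 0 1)) = g * mu" by simp
          ultimately show ?thesis using nz F g by (intro bexI[of _ "D (Q 0 0) (Q 0 1)"]) auto
        qed
      qed
    qed
  qed
qed

lemma L1_0:
  assumes mu4: "4 * mu + 1 \<noteq> 0" and y: "y \<noteq> 0"
  shows "Nm mu [] (Q (-y) (2*y)) \<noteq> 0 \<and> tr0 (Q (-y) (2*y)) = 0 \<and> bf mu [] (Q x y) (Q (-y) (2*y)) \<noteq> (0::'a::field)"
proof -
  have m4: "1 + mu * 4 \<noteq> 0" using mu4 by (simp add: algebra_simps)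
  have e1: "bf mu [] (Q x y) (Q (-y) (2*y)) = - (y * y * (1 + mu * 4))" unfolding bf_def by (simp add: algebra_simps)
  have e2: "Nm mu [] (Q (-y) (2*y)) = - (y * y * (1 + mu * 4))" by (simp add: algebra_simps)
  show ?thesis using e1 e2 m4 y by simp
qed

lemma L1_1:
  assumes mu4: "4 * mu + 1 \<noteq> 0" and g: "g \<noteq> 0" and l: "l \<in> cd_carrier 1" "\<forall>c. l \<noteq> cd_scalar 1 c"
  shows "\<exists>u \<in> cd_carrier 1. Nm mu [g] u \<noteq> 0 \<and> tr0 u = 0 \<and> bf mu [g] l u \<noteq> (0::'a::field)"
proof -
  obtain x y p q where ll: "l = D (Q x y) (Q p q)" using l(1) by (auto simp: numeral_2_eq_2)
  show ?thesis
  proof (cases "y = 0")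
    case False
    have e1: "bf mu [g] l (D (Q (-y) (2*y)) (Q 0 0)) = bf mu [] (Q x y) (Q (-y) (2*y))" unfolding ll bf_def by (simp add: cd_neg_def algebra_simps)
    have e2: "Nm mu [g] (D (Q (-y) (2*y)) (Q 0 0)) = Nm mu [] (Q (-y) (2*y))" by simp
    show ?thesis using L1_0[OF mu4 False, of x] e1 e2 by (intro bexI[of _ "D (Q (-y) (2*y)) (Q 0 0)"]) auto
  next
    case y0: True
    have b: "Q p q \<noteq> Q 0 0" using l(2) ll y0 by (auto simp: numeral_2_eq_2)
    show ?thesis
    proof (cases "2 = (0::'a) \<and> mu = 0 \<and> 2 * p + q = 0")
      case False
      obtain z where z: "z \<in> cd_carrier 0" "Nm mu [] z \<noteq> 0" "bf mu [] z (Q p q) \<noteq> 0" using L2_0[OF mu4 b False] by blast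
      obtain x2 y2 where zz: "z = Q x2 y2" using z(1) by auto
      have e1: "bf mu [g] l (D (Q 0 0) z) = - g * bf mu [] z (Q p q)" unfolding ll zz bf_def by (simp add: cd_neg_def algebra_simps)
      have e2: "Nm mu [g] (D (Q 0 0) z) = - g * Nm mu [] z" unfolding zz by simp
      show ?thesis using z e1 e2 g by (intro bexI[of _ "D (Q 0 0) z"]) (auto simp: zz)
    next
      case True
      then have two: "(2::'a) = 0" and m0: "mu = 0" and pq: "2 * p + q = 0" by auto
      have q: "q = 0" using pq two by simp
      have p: "p \<noteq> 0" using b q by auto
      have e1: "bf mu [g] l (D (Q 1 0) (Q 0 1)) = x * 2 + g * (mu * (q * 2)) - g * p" unfolding ll y0 bf_def by (simp add: cd_neg_def algebra_simps)
      have e2: "Nm mu [g] (D (Q 1 0) (Q 0 1)) = 1" using m0 by simp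
      have e3: "tr0 (D (Q 1 0) (Q 0 1)) = (0::'a)" using two by simp
      have "x * 2 + g * (mu * (q * 2)) - g * p = - (g * p)" using two by simp
      then have e4: "bf mu [g] l (D (Q 1 0) (Q 0 1)) \<noteq> 0" using e1 p g by simp
      show ?thesis using e2 e3 e4 by (intro bexI[of _ "D (Q 1 0) (Q 0 1)"]) auto
    qed
  qed
qed

lemma Nm_zero[simp]: "Nm mu gs (cd_zero (length gs)) = 0"
  by (induction gs) auto

lemma bfD1: "a \<in> cd_carrier (length gs) \<Longrightarrow> b \<in> cd_carrier (length gs) \<Longrightarrow> u \<in> cd_carrier (length gs) \<Longrightarrow>
  bf mu (g # gs) (D a b) (D u (cd_zero (length gs))) = bf mu gs a u"
  unfolding bf_def by (simp add: tr0_add[where n="length gs"])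
lemma bfD2: "a \<in> cd_carrier (length gs) \<Longrightarrow> b \<in> cd_carrier (length gs) \<Longrightarrow> z \<in> cd_carrier (length gs) \<Longrightarrow>
  bf mu (g # gs) (D a b) (D (cd_zero (length gs)) z) = - g * bf mu gs z b"
  unfolding bf_def by (simp add: tr0_add[where n="length gs"] mult_smult_right cd_neg_def)
lemma bfD3: "a \<in> cd_carrier (length gs) \<Longrightarrow> b \<in> cd_carrier (length gs) \<Longrightarrow> u \<in> cd_carrier (length gs) \<Longrightarrow>
  bf mu (g # gs) (D u (cd_zero (length gs))) (D a b) = bf mu gs u a"
  unfolding bf_def by (simp add: tr0_add[where n="length gs"])
lemma bfD4: "a \<in> cd_carrier (length gs) \<Longrightarrow> b \<in> cd_carrier (length gs) \<Longrightarrow> z \<in> cd_carrier (length gs) \<Longrightarrow>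
  bf mu (g # gs) (D (cd_zero (length gs)) z) (D a b) = - g * bf mu gs z b"
proof -
  assume c: "a \<in> cd_carrier (length gs)" "b \<in> cd_carrier (length gs)" "z \<in> cd_carrier (length gs)"
  have "tr0 (cd_mult mu gs (cd_conj b) z) = tr0 (cd_conj (cd_mult mu gs (cd_conj z) b))"
    using c by (simp add: conj_mult)
  also have "\<dots> = bf mu gs z b" using c by (simp add: bf_def tr0_conj[of _ "length gs"])
  finally have e: "tr0 (cd_mult mu gs (cd_conj b) z) = bf mu gs z b" .
  show ?thesis unfolding bf_def using c e[unfolded bf_def] by (simp add: tr0_add[where n="length gs"] mult_smult_right cd_neg_def)
qed



fun uv :: "'a::field \<Rightarrow> 'a \<Rightarrow> nat \<Rightarrow> 'a \<times> 'a" where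
  "uv t N 0 = (0, 1)"
| "uv t N (Suc k) = (t * fst (uv t N k) + snd (uv t N k), - N * fst (uv t N k))"

abbreviation "U t N k \<equiv> fst (uv t N k)"
abbreviation "V t N k \<equiv> snd (uv t N k)"

lemma uv_add: "U t N (i + j) = (t * U t N i + V t N i) * U t N j + U t N i * V t N j \<and>
               V t N (i + j) = V t N i * V t N j - N * U t N i * U t N j"
  by (induction i) (auto simp: algebra_simps)

lemma pow_formula:
  assumes r: "r \<in> cd_carrier (length gs)"
    and rr: "cd_mult mu gs r r = cd_add (cd_smult t r) (cd_scalar (length gs) (- N))"
  shows "cd_pow mu gs r k = cd_add (cd_smult (U t N k) r) (cd_scalar (length gs) (V t N k))"
proof (induction k)
  case 0
  show ?case using r by (auto intro!: crd_inj[where n="length gs"] simp: crd_add[where n="length gs"])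
next
  case (Suc k)
  have "cd_pow mu gs r (Suc k) = cd_mult mu gs r (cd_add (cd_smult (U t N k) r) (cd_scalar (length gs) (V t N k)))"
    using Suc by simp
  also have "\<dots> = cd_add (cd_smult (U t N k) (cd_mult mu gs r r)) (cd_smult (V t N k) r)"
    using r by (simp add: mult_add_right mult_smult_right mult_scalar_right)
  also have "\<dots> = cd_add (cd_smult (U t N (Suc k)) r) (cd_scalar (length gs) (V t N (Suc k)))"
    using r rr by (auto intro!: crd_inj[where n="length gs"] simp: crd_add[where n="length gs"] algebra_simps)
  finally show ?case .
qed

lemma sum_mult_right:
  assumes "\<And>x. x \<in> set xs \<Longrightarrow> f x \<in> cd_carrier (length gs)" "r \<in> cd_carrier (length gs)"
  shows "cd_mult mu gs (cd_sum (length gs) (map f xs)) r = cd_sum (length gs) (map (\<lambda>x. cd_mult mu gs (f x) r) xs)"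
  using assms
proof (induction xs)
  case Nil then show ?case by (simp add: cd_sum_def)
next
  case (Cons a xs)
  have c: "cd_sum (length gs) (map f xs) \<in> cd_carrier (length gs)" using Cons.prems by (intro sum_carrier) auto
  have "cd_mult mu gs (cd_sum (length gs) (map f (a # xs))) r = cd_mult mu gs (cd_add (f a) (cd_sum (length gs) (map f xs))) r"
    by (simp add: cd_sum_def)
  also have "\<dots> = cd_add (cd_mult mu gs (f a) r) (cd_mult mu gs (cd_sum (length gs) (map f xs)) r)"
    using Cons.prems c by (simp add: mult_add_left)
  also have "\<dots> = cd_sum (length gs) (map (\<lambda>x. cd_mult mu gs (f x) r) (a # xs))"
    using Cons by (simp add: cd_sum_def)
  finally show ?case .
qed

lemma sum_mult_left:
  assumes "\<And>x. x \<in> set xs \<Longrightarrow> f x \<in> cd_carrier (length gs)" "r \<in> cd_carrier (length gs)"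
  shows "cd_mult mu gs r (cd_sum (length gs) (map f xs)) = cd_sum (length gs) (map (\<lambda>x. cd_mult mu gs r (f x)) xs)"
  using assms
proof (induction xs)
  case Nil then show ?case by (simp add: cd_sum_def)
next
  case (Cons a xs)
  have c: "cd_sum (length gs) (map f xs) \<in> cd_carrier (length gs)" using Cons.prems by (intro sum_carrier) auto
  have "cd_mult mu gs r (cd_sum (length gs) (map f (a # xs))) = cd_mult mu gs r (cd_add (f a) (cd_sum (length gs) (map f xs)))"
    by (simp add: cd_sum_def)
  also have "\<dots> = cd_add (cd_mult mu gs r (f a)) (cd_mult mu gs r (cd_sum (length gs) (map f xs)))"
    using Cons.prems c by (simp add: mult_add_right)
  also have "\<dots> = cd_sum (length gs) (map (\<lambda>x. cd_mult mu gs r (f x)) (a # xs))"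
    using Cons by (simp add: cd_sum_def)
  finally show ?case .
qed

lemma crd_sum_map: "(\<And>x. x \<in> set xs \<Longrightarrow> f x \<in> cd_carrier n) \<Longrightarrow> crd (cd_sum n (map f xs)) i = (\<Sum>x\<leftarrow>xs. crd (f x) i)"
  by (subst crd_sum) (auto simp: comp_def)

definition alph :: "'a::field \<Rightarrow> 'a \<Rightarrow> 'a list \<Rightarrow> 'a cd list \<Rightarrow> 'a cd" where
  "alph t N gs fs = cd_sum (length gs) (map (\<lambda>k. cd_smult (U t N k) (fs ! k)) [0..<length fs])"
definition bet :: "'a::field \<Rightarrow> 'a \<Rightarrow> 'a list \<Rightarrow> 'a cd list \<Rightarrow> 'a cd" where
  "bet t N gs fs = cd_sum (length gs) (map (\<lambda>k. cd_smult (V t N k) (fs ! k)) [0..<length fs])"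

lemma alph_carrier[simp]: "\<forall>a \<in> set fs. a \<in> cd_carrier (length gs) \<Longrightarrow> alph t N gs fs \<in> cd_carrier (length gs)"
  unfolding alph_def by (intro sum_carrier) auto
lemma bet_carrier[simp]: "\<forall>a \<in> set fs. a \<in> cd_carrier (length gs) \<Longrightarrow> bet t N gs fs \<in> cd_carrier (length gs)"
  unfolding bet_def by (intro sum_carrier) auto

lemma eval_formula:
  assumes fs: "\<forall>a \<in> set fs. a \<in> cd_carrier (length gs)"
    and r: "r \<in> cd_carrier (length gs)"
    and rr: "cd_mult mu gs r r = cd_add (cd_smult t r) (cd_scalar (length gs) (- N))"
  shows "cd_poly_eval mu gs fs r = cd_add (cd_mult mu gs (alph t N gs fs) r) (bet t N gs fs)"
proof (rule crd_inj[where n="length gs"])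
  let ?n = "length gs"
  have fk: "fs ! k \<in> cd_carrier ?n" if "k < length fs" for k using fs that by auto
  show "cd_poly_eval mu gs fs r \<in> cd_carrier ?n" unfolding cd_poly_eval_def using fk r by (intro sum_carrier) auto
  show "cd_add (cd_mult mu gs (alph t N gs fs) r) (bet t N gs fs) \<in> cd_carrier ?n" using fs r by simp
  fix i
  have "crd (cd_poly_eval mu gs fs r) i = (\<Sum>k\<leftarrow>[0..<length fs]. crd (cd_mult mu gs (fs ! k) (cd_pow mu gs r k)) i)"
    unfolding cd_poly_eval_def using fk r by (subst crd_sum_map[where n="?n"]) auto
  also have "\<dots> = (\<Sum>k\<leftarrow>[0..<length fs]. U t N k * crd (cd_mult mu gs (fs ! k) r) i + V t N k * crd (fs ! k) i)"
    using fk r by (intro arg_cong[where f=sum_list] map_cong)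
       (auto simp: pow_formula[OF r rr] mult_add_right mult_smult_right mult_scalar_right crd_add[where n="?n"])
  also have "\<dots> = crd (cd_add (cd_mult mu gs (alph t N gs fs) r) (bet t N gs fs)) i"
  proof -
    have A: "cd_mult mu gs (alph t N gs fs) r = cd_sum ?n (map (\<lambda>k. cd_mult mu gs (cd_smult (U t N k) (fs ! k)) r) [0..<length fs])"
      unfolding alph_def using fk r by (subst sum_mult_right) auto
    have "crd (cd_add (cd_mult mu gs (alph t N gs fs) r) (bet t N gs fs)) i
        = crd (cd_mult mu gs (alph t N gs fs) r) i + crd (bet t N gs fs) i"
      using fs r by (simp add: crd_add[where n="?n"])
    also have "crd (cd_mult mu gs (alph t N gs fs) r) i = (\<Sum>k\<leftarrow>[0..<length fs]. U t N k * crd (cd_mult mu gs (fs ! k) r) i)"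
      unfolding A using fk r by (subst crd_sum_map[where n="?n"]) (auto simp: mult_smult_left intro!: arg_cong[where f=sum_list] map_cong)
    also have "crd (bet t N gs fs) i = (\<Sum>k\<leftarrow>[0..<length fs]. V t N k * crd (fs ! k) i)"
      unfolding bet_def using fk by (subst crd_sum_map[where n="?n"]) auto
    finally show ?thesis by (simp add: sum_list_addf)
  qed
  finally show "crd (cd_poly_eval mu gs fs r) i = crd (cd_add (cd_mult mu gs (alph t N gs fs) r) (bet t N gs fs)) i" .
qed



lemma L2:
  assumes "gs \<noteq> []" "4 * mu + 1 \<noteq> 0" "\<forall>g\<in>set gs. g \<noteq> 0" "b \<in> cd_carrier (length gs)" "b \<noteq> cd_zero (length gs)"
  shows "\<exists>z. canc mu gs z \<and> Nm mu gs z \<noteq> 0 \<and> bf mu gs z (b::'a::field cd) \<noteq> 0"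
  using assms
proof (induction gs arbitrary: b)
  case Nil then show ?case by simp
next
  case (Cons g gs)
  have g: "g \<noteq> 0" using Cons.prems by auto
  show ?case
  proof (cases "gs = []")
    case True
    have b1: "b \<in> cd_carrier 1" "b \<noteq> cd_zero 1" using Cons.prems True by auto
    obtain z where z: "z \<in> cd_carrier 1" "Nm mu [g] z \<noteq> 0" "bf mu [g] z b \<noteq> 0" using L2_1[OF Cons.prems(2) g b1] by blast
    have "canc mu [g] z" using base_canc[of "[g]" z mu] z by simp
    then show ?thesis using z True by auto
  next
    case False
    obtain b1 b2 where bb: "b = D b1 b2" "b1 \<in> cd_carrier (length gs)" "b2 \<in> cd_carrier (length gs)"
      using Cons.prems(4) by (rule Cons_carrierE)
    have gs: "\<forall>g\<in>set gs. g \<noteq> 0" using Cons.prems by auto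
    show ?thesis
    proof (cases "b1 = cd_zero (length gs)")
      case False
      obtain z where z: "canc mu gs z" "Nm mu gs z \<noteq> 0" "bf mu gs z b1 \<noteq> 0"
        using Cons.IH[OF \<open>gs \<noteq> []\<close> Cons.prems(2) gs bb(2) False] by blast
      have zc: "z \<in> cd_carrier (length gs)" using z(1) by (simp add: canc_def)
      have "canc mu (g # gs) (D z (cd_zero (length gs)))" using canc_step(1)[OF z(1) g] .
      moreover have "Nm mu (g # gs) (D z (cd_zero (length gs))) = Nm mu gs z" by simp
      moreover have "bf mu (g # gs) (D z (cd_zero (length gs))) b = bf mu gs z b1" unfolding bb(1) using bfD3[OF bb(2,3) zc] .
      ultimately show ?thesis using z by metis
    next
      case True
      then have b2: "b2 \<noteq> cd_zero (length gs)" using Cons.prems(5) bb by auto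
      obtain z where z: "canc mu gs z" "Nm mu gs z \<noteq> 0" "bf mu gs z b2 \<noteq> 0"
        using Cons.IH[OF \<open>gs \<noteq> []\<close> Cons.prems(2) gs bb(3) b2] by blast
      have zc: "z \<in> cd_carrier (length gs)" using z(1) by (simp add: canc_def)
      have "canc mu (g # gs) (D (cd_zero (length gs)) z)" using canc_step(2)[OF z(1) g] .
      moreover have "Nm mu (g # gs) (D (cd_zero (length gs)) z) = - g * Nm mu gs z" by simp
      moreover have "bf mu (g # gs) (D (cd_zero (length gs)) z) b = - g * bf mu gs z b2" unfolding bb(1) using bfD4[OF bb(2,3) zc] .
      ultimately show ?thesis using z g by (metis mult_eq_0_iff neg_equal_0_iff_equal)
    qed
  qed
qed

lemma L1:
  assumes "4 * mu + 1 \<noteq> 0" "\<forall>g\<in>set gs. g \<noteq> 0" "l \<in> cd_carrier (length gs)" "\<forall>c. l \<noteq> cd_scalar (length gs) c"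
  shows "\<exists>u. canc mu gs u \<and> Nm mu gs u \<noteq> 0 \<and> tr0 u = 0 \<and> bf mu gs l (u::'a::field cd) \<noteq> 0"
  using assms
proof (induction gs arbitrary: l)
  case Nil
  obtain x y where ll: "l = Q x y" using Nil.prems(3) by auto
  have y: "y \<noteq> 0" using Nil.prems(4) ll by auto
  have h: "Nm mu [] (Q (-y) (2*y)) \<noteq> 0 \<and> tr0 (Q (-y) (2*y)) = 0 \<and> bf mu [] (Q x y) (Q (-y) (2*y)) \<noteq> 0"
    using L1_0[OF Nil.prems(1) y] .
  have "canc mu [] (Q (-y) (2*y))" using base_canc[of "[]" "Q (-y) (2*y)" mu] h by simp
  then show ?case using h ll by blast
next
  case (Cons g gs)
  have g: "g \<noteq> 0" using Cons.prems by auto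
  show ?case
  proof (cases "gs = []")
    case True
    have l1: "l \<in> cd_carrier 1" "\<forall>c. l \<noteq> cd_scalar 1 c" using Cons.prems True by auto
    obtain u where u: "u \<in> cd_carrier 1" "Nm mu [g] u \<noteq> 0" "tr0 u = 0" "bf mu [g] l u \<noteq> 0" using L1_1[OF Cons.prems(1) g l1] by blast
    have "canc mu [g] u" using base_canc[of "[g]" u mu] u by simp
    then show ?thesis using u True by auto
  next
    case False
    obtain a b where ll: "l = D a b" "a \<in> cd_carrier (length gs)" "b \<in> cd_carrier (length gs)"
      using Cons.prems(3) by (rule Cons_carrierE)
    have gs: "\<forall>g\<in>set gs. g \<noteq> 0" using Cons.prems by auto
    show ?thesis
    proof (cases "\<forall>c. a \<noteq> cd_scalar (length gs) c")
      case True
      obtain u where u: "canc mu gs u" "Nm mu gs u \<noteq> 0" "tr0 u = 0" "bf mu gs a u \<noteq> 0"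
        using Cons.IH[OF Cons.prems(1) gs ll(2) True] by blast
      have uc: "u \<in> cd_carrier (length gs)" using u(1) by (simp add: canc_def)
      have "canc mu (g # gs) (D u (cd_zero (length gs)))" using canc_step(1)[OF u(1) g] .
      moreover have "Nm mu (g # gs) (D u (cd_zero (length gs))) = Nm mu gs u" by simp
      moreover have "tr0 (D u (cd_zero (length gs))) = 0" using u by simp
      moreover have "bf mu (g # gs) l (D u (cd_zero (length gs))) = bf mu gs a u" unfolding ll(1) using bfD1[OF ll(2,3) uc] .
      ultimately show ?thesis using u by metis
    next
      case F: False
      then obtain c where c: "a = cd_scalar (length gs) c" by blast
      have b: "b \<noteq> cd_zero (length gs)" using Cons.prems(4) ll c by auto
      obtain z where z: "canc mu gs z" "Nm mu gs z \<noteq> 0" "bf mu gs z b \<noteq> 0"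
        using L2[OF False Cons.prems(1) gs ll(3) b] by blast
      have zc: "z \<in> cd_carrier (length gs)" using z(1) by (simp add: canc_def)
      have "canc mu (g # gs) (D (cd_zero (length gs)) z)" using canc_step(2)[OF z(1) g] .
      moreover have "Nm mu (g # gs) (D (cd_zero (length gs)) z) = - g * Nm mu gs z" by simp
      moreover have "tr0 (D (cd_zero (length gs)) z) = 0" by simp
      moreover have "bf mu (g # gs) l (D (cd_zero (length gs)) z) = - g * bf mu gs z b" unfolding ll(1) using bfD2[OF ll(2,3) zc] .
      ultimately show ?thesis using z g by (metis mult_eq_0_iff neg_equal_0_iff_equal)
    qed
  qed
qed



lemma sq_formula:
  assumes x: "x \<in> cd_carrier (length gs)"
  shows "cd_mult mu gs x x = cd_add (cd_smult (tr0 x) x) (cd_scalar (length gs) (- Nm mu gs x))"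
proof -
  let ?n = "length gs"
  have "cd_smult (tr0 x) x = cd_mult mu gs (cd_add x (cd_conj x)) x"
    using x by (simp add: tr_scalar[where n="?n"] mult_scalar_left)
  also have "\<dots> = cd_add (cd_mult mu gs x x) (cd_scalar ?n (Nm mu gs x))"
    using x by (simp add: mult_add_left norm_scalar)
  finally have e: "cd_smult (tr0 x) x = cd_add (cd_mult mu gs x x) (cd_scalar ?n (Nm mu gs x))" .
  show ?thesis
  proof (rule crd_inj[where n="?n"])
    fix i
    have "crd (cd_smult (tr0 x) x) i = crd (cd_mult mu gs x x) i + crd (cd_scalar ?n (Nm mu gs x)) i"
      using e x by (simp add: crd_add[where n="?n"])
    then show "crd (cd_mult mu gs x x) i = crd (cd_add (cd_smult (tr0 x) x) (cd_scalar (length gs) (- Nm mu gs x))) i"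
      using x by (simp add: crd_add[where n="?n"] algebra_simps)
  qed (use x in auto)
qed

lemma add_swap_mid: "a \<in> cd_carrier n \<Longrightarrow> b \<in> cd_carrier n \<Longrightarrow> c \<in> cd_carrier n \<Longrightarrow> d \<in> cd_carrier n \<Longrightarrow>
  cd_add (cd_add a b) (cd_add c d) = cd_add (cd_add a c) (cd_add b d)"
  by (rule crd_inj[where n=n]) (auto simp: crd_add[where n=n] algebra_simps)

lemma Nm_add:
  assumes x: "x \<in> cd_carrier (length gs)" and y: "y \<in> cd_carrier (length gs)"
  shows "Nm mu gs (cd_add x y) = Nm mu gs x + Nm mu gs y + bf mu gs x y"
proof -
  let ?n = "length gs"
  let ?p = "cd_mult mu gs (cd_conj x) y"
  have p: "?p \<in> cd_carrier ?n" using x y by simp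
  have cp: "cd_conj ?p = cd_mult mu gs (cd_conj y) x" using x y by (simp add: conj_mult)
  have "cd_scalar ?n (Nm mu gs (cd_add x y)) = cd_mult mu gs (cd_conj (cd_add x y)) (cd_add x y)"
    using x y by (simp add: norm_scalar)
  also have "\<dots> = cd_add (cd_add (cd_mult mu gs (cd_conj x) x) ?p) (cd_add (cd_mult mu gs (cd_conj y) x) (cd_mult mu gs (cd_conj y) y))"
    using x y by (simp add: conj_add[where n="?n"] mult_add_left mult_add_right add_swap_mid[where n="?n"])
  also have "\<dots> = cd_add (cd_add (cd_scalar ?n (Nm mu gs x)) ?p) (cd_add (cd_conj ?p) (cd_scalar ?n (Nm mu gs y)))"
    using x y cp by (simp add: norm_scalar)
  finally have e: "cd_scalar ?n (Nm mu gs (cd_add x y)) = cd_add (cd_add (cd_scalar ?n (Nm mu gs x)) ?p) (cd_add (cd_conj ?p) (cd_scalar ?n (Nm mu gs y)))" .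
  have t: "cd_add ?p (cd_conj ?p) = cd_scalar ?n (bf mu gs x y)" using p by (simp add: tr_scalar[where n="?n"] bf_def)
  have "crd (cd_scalar ?n (Nm mu gs (cd_add x y))) 0 = crd (cd_add (cd_add (cd_scalar ?n (Nm mu gs x)) ?p) (cd_add (cd_conj ?p) (cd_scalar ?n (Nm mu gs y)))) 0"
    using e by simp
  also have "\<dots> = Nm mu gs x + Nm mu gs y + (crd ?p 0 + crd (cd_conj ?p) 0)"
    using p by (simp add: crd_add[where n="?n"])
  also have "crd ?p 0 + crd (cd_conj ?p) 0 = bf mu gs x y"
    using arg_cong[OF t, of "\<lambda>z. crd z 0"] p by (simp add: crd_add[where n="?n"])
  finally show ?thesis by simp
qed

lemma charpoly_iff:
  assumes l: "l \<in> cd_carrier (length gs)" and r: "r \<in> cd_carrier (length gs)"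
  shows "cd_charpoly_eval mu gs l r = cd_zero (length gs) \<longleftrightarrow>
         cd_mult mu gs r r = cd_add (cd_smult (tr0 l) r) (cd_scalar (length gs) (- Nm mu gs l))"
proof -
  let ?n = "length gs"
  have e: "cd_charpoly_eval mu gs l r = cd_add (cd_sub (cd_mult mu gs r r) (cd_smult (tr0 l) r)) (cd_scalar ?n (Nm mu gs l))"
    unfolding cd_charpoly_eval_def cd_tr_def cd_norm_def using l r
    by (simp add: numeral_2_eq_2 tr_scalar[where n="?n"] mult_scalar_left norm_scalar mult_one_both)
  show ?thesis
  proof
    assume h: "cd_charpoly_eval mu gs l r = cd_zero ?n"
    show "cd_mult mu gs r r = cd_add (cd_smult (tr0 l) r) (cd_scalar ?n (- Nm mu gs l))"
    proof (rule crd_inj[where n="?n"])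
      fix i
      have "crd (cd_charpoly_eval mu gs l r) i = 0" using h by simp
      then show "crd (cd_mult mu gs r r) i = crd (cd_add (cd_smult (tr0 l) r) (cd_scalar ?n (- Nm mu gs l))) i"
        unfolding e using l r by (simp add: crd_add[where n="?n"] crd_sub[where n="?n"] algebra_simps split: if_splits)
    qed (use l r in auto)
  next
    assume h: "cd_mult mu gs r r = cd_add (cd_smult (tr0 l) r) (cd_scalar ?n (- Nm mu gs l))"
    show "cd_charpoly_eval mu gs l r = cd_zero ?n"
      unfolding e h using l r by (intro crd_inj[where n="?n"]) (auto simp: crd_add[where n="?n"] crd_sub[where n="?n"])
  qed
qed



lemma bf_smult_right: "x \<in> cd_carrier (length gs) \<Longrightarrow> y \<in> cd_carrier (length gs) \<Longrightarrow> bf mu gs x (cd_smult c y) = c * bf mu gs x y"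
  unfolding bf_def by (simp add: mult_smult_right)

lemma alpha_beta_zero:
  assumes valid: "cd_valid mu gs" and fs: "\<forall>a \<in> set fs. a \<in> cd_carrier (length gs)"
    and sph: "cd_spherical_root mu gs fs l"
  shows "alph (tr0 l) (Nm mu gs l) gs fs = cd_zero (length gs) \<and> bet (tr0 l) (Nm mu gs l) gs fs = cd_zero (length gs)"
proof -
  let ?n = "length gs"
  let ?t = "tr0 l" and ?N = "Nm mu gs l"
  let ?a = "alph ?t ?N gs fs" and ?b = "bet ?t ?N gs fs"
  have l: "l \<in> cd_carrier ?n" and ns: "\<forall>c. l \<noteq> cd_scalar ?n c" and fl: "cd_poly_eval mu gs fs l = cd_zero ?n"
    and all: "\<And>r. r \<in> cd_carrier ?n \<Longrightarrow> cd_charpoly_eval mu gs l r = cd_zero ?n \<Longrightarrow> cd_poly_eval mu gs fs r = cd_zero ?n"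
    using sph unfolding cd_spherical_root_def cd_is_scalar_def by auto
  have mu4: "4 * mu + 1 \<noteq> 0" and gs: "\<forall>g\<in>set gs. g \<noteq> 0" using valid by (auto simp: cd_valid_def)
  obtain u where u: "canc mu gs u" "Nm mu gs u \<noteq> 0" "tr0 u = 0" "bf mu gs l u \<noteq> 0"
    using L1[OF mu4 gs l ns] by blast
  have uc: "u \<in> cd_carrier ?n" using u(1) by (simp add: canc_def)
  define tau where "tau = - bf mu gs l u / Nm mu gs u"
  have tau0: "tau \<noteq> 0" using u by (simp add: tau_def)
  have taueq: "tau * Nm mu gs u + bf mu gs l u = 0" using u(2) by (simp add: tau_def)
  define r where "r = cd_add l (cd_smult tau u)"
  have rc: "r \<in> cd_carrier ?n" using l uc by (simp add: r_def)
  have tr: "tr0 r = ?t" using l uc u(3) by (simp add: r_def tr0_add[where n="?n"])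
  have "Nm mu gs r = ?N + tau * (tau * Nm mu gs u + bf mu gs l u)"
    using l uc by (simp add: r_def Nm_add Nm_smult bf_smult_right algebra_simps)
  then have nr: "Nm mu gs r = ?N" using taueq by simp
  have rr: "cd_mult mu gs r r = cd_add (cd_smult ?t r) (cd_scalar ?n (- ?N))"
    using sq_formula[OF rc, of mu] tr nr by simp
  have ll: "cd_mult mu gs l l = cd_add (cd_smult ?t l) (cd_scalar ?n (- ?N))"
    using sq_formula[OF l, of mu] by simp
  have fr: "cd_poly_eval mu gs fs r = cd_zero ?n" using all[OF rc] charpoly_iff[OF l rc] rr by blast
  have ac: "?a \<in> cd_carrier ?n" and bc: "?b \<in> cd_carrier ?n" using fs by auto
  have e1: "cd_add (cd_mult mu gs ?a r) ?b = cd_zero ?n" using eval_formula[OF fs rc rr] fr by simp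
  have e2: "cd_add (cd_mult mu gs ?a l) ?b = cd_zero ?n" using eval_formula[OF fs l ll] fl by simp
  have "cd_mult mu gs ?a r = cd_add (cd_mult mu gs ?a l) (cd_smult tau (cd_mult mu gs ?a u))"
    using ac l uc by (simp add: r_def mult_add_right mult_smult_right)
  then have "cd_smult tau (cd_mult mu gs ?a u) = cd_zero ?n"
  proof -
    assume h: "cd_mult mu gs ?a r = cd_add (cd_mult mu gs ?a l) (cd_smult tau (cd_mult mu gs ?a u))"
    show ?thesis
    proof (rule crd_inj[where n="?n"])
      fix i
      have "crd (cd_add (cd_mult mu gs ?a r) ?b) i = crd (cd_add (cd_mult mu gs ?a l) ?b) i" using e1 e2 by simp
      then show "crd (cd_smult tau (cd_mult mu gs ?a u)) i = crd (cd_zero ?n) i"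
        using h ac bc l uc rc by (simp add: crd_add[where n="?n"])
    qed (use ac uc in auto)
  qed
  then have "cd_mult mu gs ?a u = cd_zero ?n" using tau0 ac uc by (simp add: smult_eq_zero_iff)
  then have az: "?a = cd_zero ?n" using u(1) ac unfolding canc_def rc_def by blast
  have "?b = cd_zero ?n" using e2 bc l unfolding az by simp
  then show ?thesis using az by simp
qed

lemma sum_list_upt_set: "(\<Sum>x\<leftarrow>[0..<n]. f x) = (\<Sum>x\<in>{0..<n}. f x)"
  by (simp add: sum_list_distinct_conv_sum_set)

lemma sum_list_filter_set: "(\<Sum>x\<leftarrow>filter P [0..<n]. f x) = (\<Sum>x\<in>{x. x < n \<and> P x}. f x)"
  by (subst sum_list_distinct_conv_sum_set) (auto intro!: sum.cong)

lemma reindex: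
  fixes F :: "nat \<Rightarrow> 'a::comm_ring_1" and P :: "nat \<Rightarrow> nat \<Rightarrow> 'a"
  shows "(\<Sum>m\<leftarrow>[0..<2*L]. F m * (\<Sum>j\<leftarrow>filter (\<lambda>j. j < L \<and> m - j < L) [0..<Suc m]. P j (m - j)))
       = (\<Sum>j\<leftarrow>[0..<L]. \<Sum>k\<leftarrow>[0..<L]. F (j+k) * P j k)"
proof -
  have "(\<Sum>m\<leftarrow>[0..<2*L]. F m * (\<Sum>j\<leftarrow>filter (\<lambda>j. j < L \<and> m - j < L) [0..<Suc m]. P j (m - j)))
      = (\<Sum>m\<in>{0..<2*L}. \<Sum>j\<in>{j. j < Suc m \<and> j < L \<and> m - j < L}. F m * P j (m - j))"
    by (simp only: sum_list_upt_set sum_list_filter_set sum_distrib_left)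
  also have "\<dots> = (\<Sum>p\<in>(SIGMA m:{0..<2*L}. {j. j < Suc m \<and> j < L \<and> m - j < L}). F (fst p) * P (snd p) (fst p - snd p))"
    by (subst sum.Sigma) (auto simp: case_prod_beta intro!: sum.cong)
  also have "\<dots> = (\<Sum>q\<in>{0..<L} \<times> {0..<L}. F (fst q + snd q) * P (fst q) (snd q))"
    by (rule sum.reindex_bij_witness[where i="\<lambda>q. (fst q + snd q, fst q)" and j="\<lambda>p. (snd p, fst p - snd p)"]) auto
  also have "\<dots> = (\<Sum>j\<leftarrow>[0..<L]. \<Sum>k\<leftarrow>[0..<L]. F (j+k) * P j k)"
    by (simp add: sum_list_upt_set sum.cartesian_product case_prod_beta)
  finally show ?thesis .
qed

lemma shift_zero:
  assumes fs: "\<forall>a \<in> set fs. a \<in> cd_carrier (length gs)"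
    and az: "alph t N gs fs = cd_zero (length gs)" and bz: "bet t N gs fs = cd_zero (length gs)"
  shows "cd_sum (length gs) (map (\<lambda>k. cd_smult (A * U t N k + B * V t N k) (fs ! k)) [0..<length fs]) = cd_zero (length gs)"
proof (rule crd_inj[where n="length gs"])
  let ?n = "length gs"
  have fk: "fs ! k \<in> cd_carrier ?n" if "k < length fs" for k using fs that by auto
  fix i
  have "crd (cd_sum ?n (map (\<lambda>k. cd_smult (A * U t N k + B * V t N k) (fs ! k)) [0..<length fs])) i
      = (\<Sum>k\<leftarrow>[0..<length fs]. (A * U t N k + B * V t N k) * crd (fs ! k) i)"
    using fk by (subst crd_sum_map[where n="?n"]) auto
  also have "\<dots> = A * (\<Sum>k\<leftarrow>[0..<length fs]. U t N k * crd (fs ! k) i) + B * (\<Sum>k\<leftarrow>[0..<length fs]. V t N k * crd (fs ! k) i)"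
    by (simp add: algebra_simps sum_list_addf sum_list_const_mult)
  also have "(\<Sum>k\<leftarrow>[0..<length fs]. U t N k * crd (fs ! k) i) = crd (alph t N gs fs) i"
    unfolding alph_def using fk by (subst crd_sum_map[where n="?n"]) auto
  also have "(\<Sum>k\<leftarrow>[0..<length fs]. V t N k * crd (fs ! k) i) = crd (bet t N gs fs) i"
    unfolding bet_def using fk by (subst crd_sum_map[where n="?n"]) auto
  finally show "crd (cd_sum ?n (map (\<lambda>k. cd_smult (A * U t N k + B * V t N k) (fs ! k)) [0..<length fs])) i = crd (cd_zero ?n) i"
    using az bz by simp
qed (use fs in \<open>auto intro!: sum_carrier\<close>)

lemma companion_coeffs_zero:
  assumes fs: "\<forall>a \<in> set fs. a \<in> cd_carrier (length gs)"
    and az: "alph t N gs fs = cd_zero (length gs)" and bz: "bet t N gs fs = cd_zero (length gs)"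
    and W: "\<And>j k. W (j + k) = A j * U t N k + B j * V t N k"
  shows "cd_sum (length gs) (map (\<lambda>m. cd_smult (W m) (cd_companion mu gs fs ! m)) [0..<length (cd_companion mu gs fs)]) = cd_zero (length gs)"
proof -
  let ?n = "length gs" and ?L = "length fs"
  let ?C = "cd_companion mu gs fs"
  define c where "c m = cd_sum ?n (map (\<lambda>i. cd_mult mu gs (cd_conj (fs ! i)) (fs ! (m - i))) (filter (\<lambda>i. i < ?L \<and> m - i < ?L) [0..<Suc m]))" for m
  have fk: "fs ! k \<in> cd_carrier ?n" if "k < ?L" for k using fs that by auto
  have lenC: "length ?C = 2 * ?L" by (simp add: cd_companion_def)
  have Cm: "?C ! m = c m" if "m < 2 * ?L" for m using that by (simp add: cd_companion_def c_def)
  have cc: "c m \<in> cd_carrier ?n" for m unfolding c_def using fk by (intro sum_carrier) (auto simp del: upt_Suc)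
  show ?thesis
  proof (rule crd_inj[where n="?n"])
    fix i
    define P where "P j k = crd (cd_mult mu gs (cd_conj (fs ! j)) (fs ! k)) i" for j k
    have "crd (cd_sum ?n (map (\<lambda>m. cd_smult (W m) (?C ! m)) [0..<length ?C])) i
        = (\<Sum>m\<leftarrow>[0..<2 * ?L]. W m * crd (c m) i)"
      unfolding lenC using cc Cm by (subst crd_sum_map[where n="?n"]) (auto intro!: arg_cong[where f=sum_list] map_cong)
    also have "\<dots> = (\<Sum>m\<leftarrow>[0..<2 * ?L]. W m * (\<Sum>j\<leftarrow>filter (\<lambda>j. j < ?L \<and> m - j < ?L) [0..<Suc m]. P j (m - j)))"
      unfolding c_def P_def using fk by (intro arg_cong[where f=sum_list] map_cong refl arg_cong[where f="\<lambda>x. _ * x"]) (subst crd_sum_map[where n="?n"], auto simp del: upt_Suc)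
    also have "\<dots> = (\<Sum>j\<leftarrow>[0..<?L]. \<Sum>k\<leftarrow>[0..<?L]. W (j+k) * P j k)"
      by (rule reindex)
    also have "\<dots> = (\<Sum>j\<leftarrow>[0..<?L]. 0)"
    proof (intro arg_cong[where f=sum_list] map_cong refl)
      fix j assume "j \<in> set [0..<?L]"
      then have j: "j < ?L" by simp
      have z: "cd_sum ?n (map (\<lambda>k. cd_smult (A j * U t N k + B j * V t N k) (fs ! k)) [0..<?L]) = cd_zero ?n"
        using shift_zero[OF fs az bz] .
      let ?cj = "cd_conj (fs ! j)"
      have cj: "?cj \<in> cd_carrier ?n" using fk j by simp
      have s1: "cd_mult mu gs ?cj (cd_sum ?n (map (\<lambda>k. cd_smult (A j * U t N k + B j * V t N k) (fs ! k)) [0..<?L]))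
          = cd_sum ?n (map (\<lambda>k. cd_mult mu gs ?cj (cd_smult (A j * U t N k + B j * V t N k) (fs ! k))) [0..<?L])"
        using fk cj by (intro sum_mult_left) auto
      have "(\<Sum>k\<leftarrow>[0..<?L]. W (j+k) * P j k)
          = crd (cd_mult mu gs (cd_conj (fs ! j)) (cd_sum ?n (map (\<lambda>k. cd_smult (A j * U t N k + B j * V t N k) (fs ! k)) [0..<?L]))) i"
        unfolding s1 P_def W using fk cj
        by (subst crd_sum_map[where n="?n"]) (auto simp: mult_smult_right intro!: arg_cong[where f=sum_list] map_cong)
      also have "\<dots> = 0" unfolding z using fk j by simp
      finally show "(\<Sum>k\<leftarrow>[0..<?L]. W (j+k) * P j k) = 0" .
    qed
    finally show "crd (cd_sum ?n (map (\<lambda>m. cd_smult (W m) (?C ! m)) [0..<length ?C])) i = crd (cd_zero ?n) i" by simp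
  qed (use cc Cm lenC in \<open>auto intro!: sum_carrier\<close>)
qed

theorem theorem3p13:
  fixes mu :: "'a::field" and gs :: "'a list" and fs :: "'a cd list" and l :: "'a cd"
  assumes "cd_valid mu gs"
    and "\<forall>a \<in> set fs. a \<in> cd_carrier (length gs)"
    and "cd_spherical_root mu gs fs l"
  shows "cd_poly_eval mu gs (cd_companion mu gs fs) l = cd_zero (length gs)"
proof -
  let ?n = "length gs" and ?t = "tr0 l" and ?N = "Nm mu gs l"
  let ?C = "cd_companion mu gs fs"
  have ab: "alph ?t ?N gs fs = cd_zero ?n" "bet ?t ?N gs fs = cd_zero ?n"
    using alpha_beta_zero[OF assms] by auto
  have l: "l \<in> cd_carrier ?n" using assms(3) by (simp add: cd_spherical_root_def)
  have fk: "fs ! k \<in> cd_carrier ?n" if "k < length fs" for k using assms(2) that by auto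
  have Cc: "\<forall>a \<in> set ?C. a \<in> cd_carrier ?n"
    unfolding cd_companion_def using fk by (auto intro!: sum_carrier simp del: upt_Suc)
  have ll: "cd_mult mu gs l l = cd_add (cd_smult ?t l) (cd_scalar ?n (- ?N))"
    using sq_formula[OF l, of mu] by simp
  have e: "cd_poly_eval mu gs ?C l = cd_add (cd_mult mu gs (alph ?t ?N gs ?C) l) (bet ?t ?N gs ?C)"
    using eval_formula[OF Cc l ll] .
  have a0: "alph ?t ?N gs ?C = cd_zero ?n"
    unfolding alph_def
    by (rule companion_coeffs_zero[OF assms(2) ab, where A="\<lambda>j. ?t * U ?t ?N j + V ?t ?N j" and B="\<lambda>j. U ?t ?N j"])
       (simp add: uv_add)
  have b0: "bet ?t ?N gs ?C = cd_zero ?n"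
    unfolding bet_def
    by (rule companion_coeffs_zero[OF assms(2) ab, where A="\<lambda>j. - (?N * U ?t ?N j)" and B="\<lambda>j. V ?t ?N j"])
       (simp add: uv_add algebra_simps)
  show ?thesis unfolding e a0 b0 using l by simp
qed


end
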